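(* Let $f:[0,1]\to\mathbb{R}$ with $f(0),f(1)\in\mathbb{Z}$ and let $n\in\mathbb{N}_+$. If $n\ge 3$, let also $\psi_n:[0,1]\to\mathbb{R}$ satisfy \[ \psi_n\left(\frac{k+1}{n}\right)-\psi_n\left(\frac{k}{n}\right)\ge \binom{n}{k}^{-1},\quad k=1,\dots,n-2. \] If $f$ is monotone decreasing on $[0,1/n]$ and on $[1-1/n,1]$, and (when $n\ge3$) $f(x)+\psi_n(x)$ is monotone decreasing on $[1/n,1-1/n]$, then $\widetilde{B}_n(f)$ is monotone decreasing on $[0,1]$.
   Context: For $n\in\mathbb{N}_+$ and $f:[0,1]\to\mathbb{R}$, $\widetilde{B}_n(f)(x):=\sum_{k=0}^n \left[f\left(\frac{k}{n}\right)\binom{n}{k}\right]x^k(1-x)^{n-k}$, where $[\alpha]$ is the largest integer $\le\alpha$. Monotone decreasing is meant in the non-strict sense. *)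

theory Defs
  imports Complex_Main
begin

definition Btilde :: "nat \<Rightarrow> (real \<Rightarrow> real) \<Rightarrow> real \<Rightarrow> real" where
  "Btilde n f x = (\<Sum>k=0..n. of_int \<lfloor>f (real k / real n) * real (n choose k)\<rfloor>
                       * x ^ k * (1 - x) ^ (n - k))"

end

theory Submission
  imports Defs
begin

definition bern :: "(nat \<Rightarrow> real) \<Rightarrow> nat \<Rightarrow> real \<Rightarrow> real" where
  "bern a n x = (\<Sum>k\<le>n. a k * real (n choose k) * x ^ k * (1 - x) ^ (n - k))"

lemma bern_0: "bern a 0 x = a 0"
  by (simp add: bern_def)

lemma bern_Suc:
  "bern a (Suc n) x = (1 - x) * bern a n x + x * bern (\<lambda>k. a (Suc k)) n x"
proof -
  have A: "(1 - x) * bern a n x =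
     (\<Sum>k\<le>Suc n. a k * real (n choose k) * x ^ k * (1 - x) ^ (Suc n - k))"
    unfolding bern_def sum_distrib_left
    by (simp add: Suc_diff_le mult_ac)
  also have "\<dots> = a 0 * (1-x)^Suc n + (\<Sum>i\<le>n. a (Suc i) * real (n choose Suc i) * x ^ Suc i * (1 - x) ^ (n - i))"
    by (subst sum.atMost_Suc_shift) simp
  finally have A': "(1 - x) * bern a n x = \<dots>" .
  have B: "x * bern (\<lambda>k. a (Suc k)) n x = (\<Sum>i\<le>n. a (Suc i) * real (n choose i) * x ^ Suc i * (1 - x) ^ (n - i))"
    unfolding bern_def sum_distrib_left by (simp add: mult_ac)
  have "bern a (Suc n) x = a 0 * (1-x)^Suc n + (\<Sum>i\<le>n. a (Suc i) * real (Suc n choose Suc i) * x ^ Suc i * (1 - x) ^ (n - i))"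
    unfolding bern_def by (subst sum.atMost_Suc_shift) simp
  also have "\<dots> = a 0 * (1-x)^Suc n + (\<Sum>i\<le>n. a (Suc i) * real (n choose Suc i) * x ^ Suc i * (1 - x) ^ (n - i))
      + (\<Sum>i\<le>n. a (Suc i) * real (n choose i) * x ^ Suc i * (1 - x) ^ (n - i))"
    by (simp add: sum.distrib[symmetric] algebra_simps)
  finally show ?thesis using A' B by simp
qed

lemma bern_coeff_mono:
  assumes "\<And>k. k \<le> n \<Longrightarrow> b k \<le> a k" "0 \<le> x" "x \<le> 1"
  shows "bern b n x \<le> bern a n x"
  unfolding bern_def using assms
  by (intro sum_mono mult_right_mono) auto

lemma bern_antimono:
  "\<forall>k<n. a (Suc k) \<le> a k \<Longrightarrow> 0 \<le> x \<Longrightarrow> x \<le> y \<Longrightarrow> y \<le> 1 \<Longrightarrow> bern a n y \<le> bern a n x"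
proof (induction n arbitrary: a)
  case 0
  then show ?case by (simp add: bern_0)
next
  case (Suc n)
  let ?P = "bern a n" and ?Q = "bern (\<lambda>k. a (Suc k)) n"
  have P: "?P y \<le> ?P x" using Suc by auto
  have Q: "?Q y \<le> ?Q x" using Suc by auto
  have QP: "?Q x \<le> ?P x"
    using Suc.prems by (intro bern_coeff_mono) auto
  have "bern a (Suc n) y = (1 - y) * ?P y + y * ?Q y" by (rule bern_Suc)
  also have "\<dots> \<le> (1 - y) * ?P x + y * ?Q x"
    using P Q Suc.prems by (intro add_mono mult_left_mono) auto
  also have "\<dots> = ?P x - y * (?P x - ?Q x)" by (simp add: algebra_simps)
  also have "\<dots> \<le> ?P x - x * (?P x - ?Q x)"
    using QP Suc.prems by (intro diff_left_mono mult_right_mono) auto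
  also have "\<dots> = bern a (Suc n) x" by (simp add: bern_Suc algebra_simps)
  finally show ?case .
qed

theorem proposition2p6:
  fixes f psi :: "real \<Rightarrow> real" and n :: nat
  assumes "f 0 \<in> \<int>" and "f 1 \<in> \<int>"
    and "n \<ge> 1"
    and "n \<ge> 3 \<Longrightarrow> \<forall>k\<in>{1..n-2}.
           psi (real (k+1) / real n) - psi (real k / real n) \<ge> 1 / real (n choose k)"
    and "antimono_on {0..1 / real n} f"
    and "antimono_on {1 - 1 / real n..1} f"
    and "n \<ge> 3 \<Longrightarrow> antimono_on {1 / real n..1 - 1 / real n} (\<lambda>x. f x + psi x)"
  shows "antimono_on {0..1} (Btilde n f)"
proof -
  define C where "C k = real (n choose k)" for k
  define a where "a k = of_int \<lfloor>f (real k / real n) * C k\<rfloor> / C k" for k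
  have Cpos: "C k > 0" if "k \<le> n" for k using that by (simp add: C_def)
  have eq: "Btilde n f x = bern a n x" for x
    unfolding Btilde_def bern_def atLeast0AtMost
    by (intro sum.cong refl) (simp add: a_def C_def)
  have n0: "real n > 0" using assms(3) by simp
  have le: "a k \<le> f (real k / real n)" if "k \<le> n" for k
  proof -
    have "of_int \<lfloor>f (real k / real n) * C k\<rfloor> \<le> f (real k / real n) * C k" by simp
    thus ?thesis using Cpos[OF that] unfolding a_def by (simp add: divide_le_eq)
  qed
  have gt: "a k > f (real k / real n) - 1 / C k" if "k \<le> n" for k
  proof -
    have "of_int \<lfloor>f (real k / real n) * C k\<rfloor> > f (real k / real n) * C k - 1" by linarith
    hence "(f (real k / real n) * C k - 1) / C k < of_int \<lfloor>f (real k / real n) * C k\<rfloor> / C k"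
      using Cpos[OF that] by (intro divide_strict_right_mono) auto
    moreover have "(f (real k / real n) * C k - 1) / C k = f (real k / real n) - 1 / C k"
      using Cpos[OF that] by (simp add: diff_divide_distrib)
    ultimately show ?thesis unfolding a_def by simp
  qed
  have a0: "a 0 = f 0"
    using assms(1) unfolding a_def C_def by (auto elim: Ints_cases)
  have an: "a n = f 1"
    using assms(2) n0 unfolding a_def C_def by (auto elim: Ints_cases)
  have mono: "a (Suc k) \<le> a k" if k: "k < n" for k
  proof -
    consider "k = 0" | "k \<ge> 1" "Suc k = n" | "k \<ge> 1" "Suc k < n" using k by linarith
    then show ?thesis
    proof cases
      case 1
      have "f (1 / real n) \<le> f 0"
        using assms(5) n0 unfolding monotone_on_def by auto
      then show ?thesis using le[of 1] k 1 a0 by simp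
    next
      case 2
      have kn: "real k / real n = 1 - 1 / real n" using 2 n0 by (simp add: field_simps)
      have "f 1 \<le> f (real k / real n)"
        using assms(6) n0 kn 2 unfolding monotone_on_def by (auto simp: field_simps)
      hence "f 1 * C k \<le> f (real k / real n) * C k" using Cpos[of k] k by (simp add: mult_right_mono)
      moreover have "f 1 * C k \<in> \<int>" using assms(2) by (simp add: C_def)
      ultimately have "f 1 * C k \<le> of_int \<lfloor>f (real k / real n) * C k\<rfloor>"
        by (metis Ints_cases floor_of_int of_int_floor_le floor_mono of_int_le_iff)
      hence "f 1 \<le> a k" using Cpos[of k] k unfolding a_def by (simp add: le_divide_eq)
      then show ?thesis using an 2 by simp
    next
      case 3
      have n3: "n \<ge> 3" using 3 by linarith
      have kin: "k \<in> {1..n-2}" using 3 by auto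
      have ps: "psi (real (k+1) / real n) - psi (real k / real n) \<ge> 1 / C k"
        using assms(4)[OF n3] kin unfolding C_def by blast
      have r1: "real k / real n \<in> {1 / real n..1 - 1 / real n}"
        using 3 n0 by (auto simp: field_simps)
      have k2: "(real k + 2) * real n \<le> real n * real n"
        using 3 by (intro mult_right_mono) auto
      have r2: "real (Suc k) / real n \<in> {1 / real n..1 - 1 / real n}"
        using 3 n0 k2 by (auto simp: field_simps)
      have ord: "real k / real n \<le> real (Suc k) / real n"
        using n0 by (simp add: divide_right_mono)
      have "f (real (Suc k) / real n) + psi (real (Suc k) / real n)
            \<le> f (real k / real n) + psi (real k / real n)"
        using assms(7)[OF n3] r1 r2 ord unfolding monotone_on_def by blast
      hence "f (real (Suc k) / real n) \<le> f (real k / real n) - 1 / C k" using ps by simp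
      then show ?thesis using le[of "Suc k"] gt[of k] 3 by linarith
    qed
  qed
  show ?thesis
    unfolding monotone_on_def eq
    using bern_antimono[of n a] mono by auto
qed

end
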